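(* Let $e_1<e_2<e_3<e_4$ be distinct reals and consider the reduced ellipsoidal integrable system $(\eta_1,\eta_2):M_h\to\mathbb R^2$ with $2h=1$, where $\eta_1=\sum_{i<j}\ell_{ij}^2\sum_{k\ne i,j}e_k$ and $\eta_2=\sum_{i<j}\ell_{ij}^2\prod_{k\ne i,j}e_k$. The set of critical values is composed of (parts of) four straight lines and a quadratic curve: the lines $\mathcal L_i:\ \eta_2-e_i(\eta_1-e_i)=0$, $i\in\{1,2,3,4\}$, and the part of the parabola $\eta_2=\eta_1^2/4$ given by $\mathcal C:(\eta_1,\eta_2)=(2t,t^2)$, $e_2\le t\le e_3$. There are six transverse intersections $\mathcal L_i\cap\mathcal L_j$ ($i\neq j$), occurring at $d_{ij}=(e_i+e_j,e_ie_j)$, and the points $d_i=(2e_i,e_i^2)$, $i\in\{2,3\}$, are the two tangential intersections of $\mathcal L_2$ and $\mathcal L_3$ with $\mathcal C$.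
   Context: $\mathbf L=(\ell_{12},\ell_{13},\ell_{14},\ell_{23},\ell_{24},\ell_{34})\in\mathbb R^6\cong\mathfrak{so}(4)^*$ with the Lie–Poisson bracket of $\mathfrak{so}(4)$ (extending $\ell_{ji}=-\ell_{ij}$: $\{\ell_{ij},\ell_{jk}\}=-\ell_{ik}$ for distinct $i,j,k$, and $\{\ell_{ij},\ell_{kl}\}=0$ when $\{i,j\}\cap\{k,l\}=\emptyset$). $M_h=\{\mathbf L:\sum_{i<j}\ell_{ij}^2=2h,\ \ell_{12}\ell_{34}-\ell_{13}\ell_{24}+\ell_{14}\ell_{23}=0\}\cong S^2\times S^2$ is a symplectic leaf; this system is the reduction of the geodesic flow on $S^3$ separated in ellipsoidal coordinates. *)

theory Defs
  imports "HOL-Analysis.Analysis"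
begin

text \<open>Coordinates: a vector L :: real^6 encodes
  (l12, l13, l14, l23, l24, l34) = (L$1, L$2, L$3, L$4, L$5, L$6).
  The parameters e_1 < e_2 < e_3 < e_4 are given as e :: nat => real (indices 1..4).\<close>

definition eta1 :: "(nat \<Rightarrow> real) \<Rightarrow> real^6 \<Rightarrow> real" where
  "eta1 e L = (L$1)^2 * (e 3 + e 4) + (L$2)^2 * (e 2 + e 4) + (L$3)^2 * (e 2 + e 3)
            + (L$4)^2 * (e 1 + e 4) + (L$5)^2 * (e 1 + e 3) + (L$6)^2 * (e 1 + e 2)"

definition eta2 :: "(nat \<Rightarrow> real) \<Rightarrow> real^6 \<Rightarrow> real" where
  "eta2 e L = (L$1)^2 * (e 3 * e 4) + (L$2)^2 * (e 2 * e 4) + (L$3)^2 * (e 2 * e 3)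
            + (L$4)^2 * (e 1 * e 4) + (L$5)^2 * (e 1 * e 3) + (L$6)^2 * (e 1 * e 2)"

definition EM :: "(nat \<Rightarrow> real) \<Rightarrow> real^6 \<Rightarrow> real \<times> real" where
  "EM e L = (eta1 e L, eta2 e L)"

definition casimirs :: "real^6 \<Rightarrow> real \<times> real" where
  "casimirs L = ((L$1)^2 + (L$2)^2 + (L$3)^2 + (L$4)^2 + (L$5)^2 + (L$6)^2,
                 L$1 * L$6 - L$2 * L$5 + L$3 * L$4)"

definition Mh :: "(real^6) set" where
  "Mh = casimirs -` {(1, 0)}"

definition tangent_space :: "real^6 \<Rightarrow> (real^6) set" where
  "tangent_space p = {v. frechet_derivative casimirs (at p) v = 0}"

definition critical_point :: "(nat \<Rightarrow> real) \<Rightarrow> real^6 \<Rightarrow> bool" where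
  "critical_point e p \<longleftrightarrow> p \<in> Mh \<and>
     frechet_derivative (EM e) (at p) ` tangent_space p \<noteq> UNIV"

definition critical_values :: "(nat \<Rightarrow> real) \<Rightarrow> (real \<times> real) set" where
  "critical_values e = EM e ` {p. critical_point e p}"

definition Lline :: "(nat \<Rightarrow> real) \<Rightarrow> nat \<Rightarrow> (real \<times> real) set" where
  "Lline e i = {(x, y). y - e i * (x - e i) = 0}"

definition parabola :: "(real \<times> real) set" where
  "parabola = {(x, y). y = x^2 / 4}"

definition Ccurve :: "(nat \<Rightarrow> real) \<Rightarrow> (real \<times> real) set" where
  "Ccurve e = {(2 * t, t^2) | t. e 2 \<le> t \<and> t \<le> e 3}"

end

theory Submission
  imports Defs
begin


lemma line_from_two:
  fixes a b c ei x1 y1 x2 y2 :: real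
  assumes "x1 \<noteq> x2" "y1 = ei*(x1-ei)" "y2 = ei*(x2-ei)" "a*x1+b*y1-c=0" "a*x2+b*y2-c=0" "a\<noteq>0 \<or> b\<noteq>0"
  shows "b \<noteq> 0 \<and> (\<forall>x y. a*x+b*y-c = b*(y - ei*(x-ei)))"
proof -
  have "(a + b*ei)*(x1-x2) = (a*x1+b*y1-c) - (a*x2+b*y2-c) + b*((ei*(x1-ei)) - y1) - b*(ei*(x2-ei) - y2)"
    by (simp add: algebra_simps)
  hence "(a + b*ei)*(x1-x2) = 0" using assms(2-5) by simp
  hence a: "a = -b*ei" using assms(1) by simp
  have "c = a*x1+b*y1" using assms(4) by linarith
  also have "\<dots> = -b*ei^2" by (simp add: a assms(2) algebra_simps power2_eq_square)
  finally have c: "c = -b*ei^2" .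
  show ?thesis using a c assms(6) by (auto simp: algebra_simps power2_eq_square)
qed

lemma d0_aux:
  fixes p1 p2 p3 p4 p5 p6 a b c ei :: real and e :: "nat \<Rightarrow> real"
  assumes S: "p1^2+p2^2+p3^2+p4^2+p5^2+p6^2 = 1"
    and lin: "\<forall>x y. a*x+b*y-c = b*(y - ei*(x-ei))" and b: "b \<noteq> 0"
    and E1: "(a*(e 3+e 4) + b*(e 3*e 4) - c)*p1 = 0"
    and E2: "(a*(e 2+e 4) + b*(e 2*e 4) - c)*p2 = 0"
    and E3: "(a*(e 2+e 3) + b*(e 2*e 3) - c)*p3 = 0"
    and E4: "(a*(e 1+e 4) + b*(e 1*e 4) - c)*p4 = 0"
    and E5: "(a*(e 1+e 3) + b*(e 1*e 3) - c)*p5 = 0"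
    and E6: "(a*(e 1+e 2) + b*(e 1*e 2) - c)*p6 = 0"
    and h1: "\<eta>1 = p1^2*(e 3+e 4) + p2^2*(e 2+e 4) + p3^2*(e 2+e 3) + p4^2*(e 1+e 4) + p5^2*(e 1+e 3) + p6^2*(e 1+e 2)"
    and h2: "\<eta>2 = p1^2*(e 3*e 4) + p2^2*(e 2*e 4) + p3^2*(e 2*e 3) + p4^2*(e 1*e 4) + p5^2*(e 1*e 3) + p6^2*(e 1*e 2)"
  shows "\<eta>2 - ei*(\<eta>1 - ei) = 0"
proof -
  define l where "l = (\<lambda>x y. y - ei*(x-ei))"
  have z: "l x y * p = 0" if "(a*x+b*y-c)*p = 0" for x y p
    using that lin b unfolding l_def by (metis mult_eq_0_iff)
  have "\<eta>2 - ei*(\<eta>1 - ei) = p1*(l (e 3+e 4) (e 3*e 4)*p1) + p2*(l (e 2+e 4) (e 2*e 4)*p2)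
     + p3*(l (e 2+e 3) (e 2*e 3)*p3) + p4*(l (e 1+e 4) (e 1*e 4)*p4) + p5*(l (e 1+e 3) (e 1*e 3)*p5)
     + p6*(l (e 1+e 2) (e 1*e 2)*p6)"
    unfolding h1 h2 l_def using S by algebra
  also have "\<dots> = 0" by (simp only: z[OF E1] z[OF E2] z[OF E3] z[OF E4] z[OF E5] z[OF E6] mult_zero_right add_0_right)
  finally show ?thesis .
qed

lemma core_d0:
  fixes p1 p2 p3 p4 p5 p6 a b c \<eta>1 \<eta>2 :: real and e :: "nat \<Rightarrow> real"
  assumes o1: "e 1 < e 2" and o2: "e 2 < e 3" and o3: "e 3 < e 4"
    and S: "p1^2+p2^2+p3^2+p4^2+p5^2+p6^2 = 1"
    and Pf: "p1*p6 - p2*p5 + p3*p4 = 0" and ab: "a \<noteq> 0 \<or> b \<noteq> 0"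
    and E1: "(a*(e 3+e 4) + b*(e 3*e 4) - c)*p1 = 0"
    and E2: "(a*(e 2+e 4) + b*(e 2*e 4) - c)*p2 = 0"
    and E3: "(a*(e 2+e 3) + b*(e 2*e 3) - c)*p3 = 0"
    and E4: "(a*(e 1+e 4) + b*(e 1*e 4) - c)*p4 = 0"
    and E5: "(a*(e 1+e 3) + b*(e 1*e 3) - c)*p5 = 0"
    and E6: "(a*(e 1+e 2) + b*(e 1*e 2) - c)*p6 = 0"
    and h1: "\<eta>1 = p1^2*(e 3+e 4) + p2^2*(e 2+e 4) + p3^2*(e 2+e 3) + p4^2*(e 1+e 4) + p5^2*(e 1+e 3) + p6^2*(e 1+e 2)"
    and h2: "\<eta>2 = p1^2*(e 3*e 4) + p2^2*(e 2*e 4) + p3^2*(e 2*e 3) + p4^2*(e 1*e 4) + p5^2*(e 1*e 3) + p6^2*(e 1*e 2)"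
  shows "\<eta>2 - e 1*(\<eta>1 - e 1) = 0 \<or> \<eta>2 - e 2*(\<eta>1 - e 2) = 0 \<or> \<eta>2 - e 3*(\<eta>1 - e 3) = 0 \<or> \<eta>2 - e 4*(\<eta>1 - e 4) = 0"
proof -
  have F: "\<eta>2 - ei*(\<eta>1-ei) = 0" if "b \<noteq> 0" "\<forall>x y. a*x+b*y-c = b*(y - ei*(x-ei))" for ei
    using d0_aux[OF S that(2) that(1) E1 E2 E3 E4 E5 E6 h1 h2] .
  have G: "\<eta>2 - ei*(\<eta>1-ei) = 0" if "x1\<noteq>x2" "y1 = ei*(x1-ei)" "y2 = ei*(x2-ei)"
     "(a*x1+b*y1-c)*q1=0" "(a*x2+b*y2-c)*q2=0" "q1 \<noteq> 0" "q2 \<noteq> 0" for ei x1 y1 x2 y2 q1 q2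
  proof -
    have "a*x1+b*y1-c=0" "a*x2+b*y2-c=0" using that(4-7) by auto
    from line_from_two[OF that(1-3) this ab] show ?thesis using F by blast
  qed
  have c12: "p1 \<noteq> 0 \<Longrightarrow> p2 \<noteq> 0 \<Longrightarrow> \<eta>2 - e 4*(\<eta>1 - e 4) = 0"
    by (rule G[OF _ _ _ E1 E2]) (use o1 o2 o3 in \<open>auto simp: algebra_simps\<close>)
  have c13: "p1 \<noteq> 0 \<Longrightarrow> p3 \<noteq> 0 \<Longrightarrow> \<eta>2 - e 3*(\<eta>1 - e 3) = 0"
    by (rule G[OF _ _ _ E1 E3]) (use o1 o2 o3 in \<open>auto simp: algebra_simps\<close>)
  have c14: "p1 \<noteq> 0 \<Longrightarrow> p4 \<noteq> 0 \<Longrightarrow> \<eta>2 - e 4*(\<eta>1 - e 4) = 0"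
    by (rule G[OF _ _ _ E1 E4]) (use o1 o2 o3 in \<open>auto simp: algebra_simps\<close>)
  have c15: "p1 \<noteq> 0 \<Longrightarrow> p5 \<noteq> 0 \<Longrightarrow> \<eta>2 - e 3*(\<eta>1 - e 3) = 0"
    by (rule G[OF _ _ _ E1 E5]) (use o1 o2 o3 in \<open>auto simp: algebra_simps\<close>)
  have c62: "p6 \<noteq> 0 \<Longrightarrow> p2 \<noteq> 0 \<Longrightarrow> \<eta>2 - e 2*(\<eta>1 - e 2) = 0"
    by (rule G[OF _ _ _ E6 E2]) (use o1 o2 o3 in \<open>auto simp: algebra_simps\<close>)
  have c63: "p6 \<noteq> 0 \<Longrightarrow> p3 \<noteq> 0 \<Longrightarrow> \<eta>2 - e 2*(\<eta>1 - e 2) = 0"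
    by (rule G[OF _ _ _ E6 E3]) (use o1 o2 o3 in \<open>auto simp: algebra_simps\<close>)
  have c64: "p6 \<noteq> 0 \<Longrightarrow> p4 \<noteq> 0 \<Longrightarrow> \<eta>2 - e 1*(\<eta>1 - e 1) = 0"
    by (rule G[OF _ _ _ E6 E4]) (use o1 o2 o3 in \<open>auto simp: algebra_simps\<close>)
  have c65: "p6 \<noteq> 0 \<Longrightarrow> p5 \<noteq> 0 \<Longrightarrow> \<eta>2 - e 1*(\<eta>1 - e 1) = 0"
    by (rule G[OF _ _ _ E6 E5]) (use o1 o2 o3 in \<open>auto simp: algebra_simps\<close>)
  have c23: "p2 \<noteq> 0 \<Longrightarrow> p3 \<noteq> 0 \<Longrightarrow> \<eta>2 - e 2*(\<eta>1 - e 2) = 0"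
    by (rule G[OF _ _ _ E2 E3]) (use o1 o2 o3 in \<open>auto simp: algebra_simps\<close>)
  have c24: "p2 \<noteq> 0 \<Longrightarrow> p4 \<noteq> 0 \<Longrightarrow> \<eta>2 - e 4*(\<eta>1 - e 4) = 0"
    by (rule G[OF _ _ _ E2 E4]) (use o1 o2 o3 in \<open>auto simp: algebra_simps\<close>)
  have c53: "p5 \<noteq> 0 \<Longrightarrow> p3 \<noteq> 0 \<Longrightarrow> \<eta>2 - e 3*(\<eta>1 - e 3) = 0"
    by (rule G[OF _ _ _ E5 E3]) (use o1 o2 o3 in \<open>auto simp: algebra_simps\<close>)
  have c54: "p5 \<noteq> 0 \<Longrightarrow> p4 \<noteq> 0 \<Longrightarrow> \<eta>2 - e 1*(\<eta>1 - e 1) = 0"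
    by (rule G[OF _ _ _ E5 E4]) (use o1 o2 o3 in \<open>auto simp: algebra_simps\<close>)
  have s1: "\<eta>2 - e 3*(\<eta>1 - e 3) = 0" if "p2=0" "p3=0" "p4=0" "p5=0" "p6=0"
  proof -
    have "p1^2 = 1" using S that by simp
    thus ?thesis using that by (simp add: h1 h2 algebra_simps)
  qed
  have s6: "\<eta>2 - e 1*(\<eta>1 - e 1) = 0" if "p2=0" "p3=0" "p4=0" "p5=0" "p1=0"
  proof -
    have "p6^2 = 1" using S that by simp
    thus ?thesis using that by (simp add: h1 h2 algebra_simps)
  qed
  have s2: "\<eta>2 - e 2*(\<eta>1 - e 2) = 0" if "p1=0" "p3=0" "p4=0" "p5=0" "p6=0"
  proof -
    have "p2^2 = 1" using S that by simp
    thus ?thesis using that by (simp add: h1 h2 algebra_simps)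
  qed
  have s5: "\<eta>2 - e 1*(\<eta>1 - e 1) = 0" if "p1=0" "p3=0" "p4=0" "p2=0" "p6=0"
  proof -
    have "p5^2 = 1" using S that by simp
    thus ?thesis using that by (simp add: h1 h2 algebra_simps)
  qed
  have s3: "\<eta>2 - e 2*(\<eta>1 - e 2) = 0" if "p1=0" "p2=0" "p4=0" "p5=0" "p6=0"
  proof -
    have "p3^2 = 1" using S that by simp
    thus ?thesis using that by (simp add: h1 h2 algebra_simps)
  qed
  have s4: "\<eta>2 - e 1*(\<eta>1 - e 1) = 0" if "p1=0" "p2=0" "p3=0" "p5=0" "p6=0"
  proof -
    have "p4^2 = 1" using S that by simp
    thus ?thesis using that by (simp add: h1 h2 algebra_simps)
  qed
  have pf1: "p1 = 0 \<or> p6 = 0" if "p2=0" "p3=0" using Pf that by simp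
  have pf2: "p2 = 0 \<or> p5 = 0" if "p1=0" "p3=0" using Pf that by simp
  have pf3: "p3 = 0 \<or> p4 = 0" if "p1=0" "p2=0" using Pf that by simp
  have nz: "\<not> (p1=0 \<and> p2=0 \<and> p3=0 \<and> p4=0 \<and> p5=0 \<and> p6=0)" using S by auto
  show ?thesis
    using c12 c13 c14 c15 c62 c63 c64 c65 c23 c24 c53 c54 s1 s2 s3 s4 s5 s6 pf1 pf2 pf3 nz
    by argo
qed

lemma core_dn:
  fixes p1 p2 p3 p4 p5 p6 a b c d \<eta>1 \<eta>2 :: real and e :: "nat \<Rightarrow> real"
  assumes o1: "e 1 < e 2" and o2: "e 2 < e 3" and o3: "e 3 < e 4"
    and S: "p1^2+p2^2+p3^2+p4^2+p5^2+p6^2 = 1"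
    and Pf: "p1*p6 - p2*p5 + p3*p4 = 0" and ab: "a \<noteq> 0 \<or> b \<noteq> 0" and d: "d \<noteq> 0"
    and E1: "(a*(e 3+e 4) + b*(e 3*e 4) - c)*p1 = d*p6"
    and E2: "(a*(e 2+e 4) + b*(e 2*e 4) - c)*p2 = -d*p5"
    and E3: "(a*(e 2+e 3) + b*(e 2*e 3) - c)*p3 = d*p4"
    and E4: "(a*(e 1+e 4) + b*(e 1*e 4) - c)*p4 = d*p3"
    and E5: "(a*(e 1+e 3) + b*(e 1*e 3) - c)*p5 = -d*p2"
    and E6: "(a*(e 1+e 2) + b*(e 1*e 2) - c)*p6 = d*p1"
    and h1: "\<eta>1 = p1^2*(e 3+e 4) + p2^2*(e 2+e 4) + p3^2*(e 2+e 3) + p4^2*(e 1+e 4) + p5^2*(e 1+e 3) + p6^2*(e 1+e 2)"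
    and h2: "\<eta>2 = p1^2*(e 3*e 4) + p2^2*(e 2*e 4) + p3^2*(e 2*e 3) + p4^2*(e 1*e 4) + p5^2*(e 1*e 3) + p6^2*(e 1*e 2)"
  shows "\<exists>t. e 2 \<le> t \<and> t \<le> e 3 \<and> \<eta>1 = 2*t \<and> \<eta>2 = t^2"
proof -
  define H1 where "H1 = a*(e 3+e 4) + b*(e 3*e 4) - c"
  define H2 where "H2 = a*(e 2+e 4) + b*(e 2*e 4) - c"
  define H3 where "H3 = a*(e 2+e 3) + b*(e 2*e 3) - c"
  define H4 where "H4 = a*(e 1+e 4) + b*(e 1*e 4) - c"
  define H5 where "H5 = a*(e 1+e 3) + b*(e 1*e 3) - c"
  define H6 where "H6 = a*(e 1+e 2) + b*(e 1*e 2) - c"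
  note E = E1[folded H1_def] E2[folded H2_def] E3[folded H3_def] E4[folded H4_def] E5[folded H5_def] E6[folded H6_def]
  have q16: "p1 = 0 \<longleftrightarrow> p6 = 0" using E(1) E(6) d by auto
  have q25: "p2 = 0 \<longleftrightarrow> p5 = 0" using E(2) E(5) d by auto
  have q34: "p3 = 0 \<longleftrightarrow> p4 = 0" using E(3) E(4) d by auto
  have P1: "H1*H6 = d^2" if "p1 \<noteq> 0"
  proof -
    have "(H1*H6 - d^2)*p1 = H6*(H1*p1) - d*d*p1" by (simp add: algebra_simps power2_eq_square)
    also have "\<dots> = 0" using E(1) E(6) by (simp add: algebra_simps)
    finally show ?thesis using that by simp
  qed
  have P2: "H2*H5 = d^2" if "p2 \<noteq> 0"
  proof -
    have "(H2*H5 - d^2)*p2 = H5*(H2*p2) - d*d*p2" by (simp add: algebra_simps power2_eq_square)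
    also have "\<dots> = 0" using E(2) E(5) by algebra
    finally show ?thesis using that by simp
  qed
  have P3: "H3*H4 = d^2" if "p3 \<noteq> 0"
  proof -
    have "(H3*H4 - d^2)*p3 = H4*(H3*p3) - d*d*p3" by (simp add: algebra_simps power2_eq_square)
    also have "\<dots> = 0" using E(3) E(4) by (simp add: algebra_simps)
    finally show ?thesis using that by simp
  qed
  have sumH: "H1*p1^2 + H2*p2^2 + H3*p3^2 = 0"
  proof -
    have "H1*p1^2 + H2*p2^2 + H3*p3^2 = p1*(H1*p1) + p2*(H2*p2) + p3*(H3*p3)"
      by (simp add: algebra_simps power2_eq_square)
    also have "\<dots> = d*(p1*p6 - p2*p5 + p3*p4)" using E by (simp add: algebra_simps)
    finally show ?thesis using Pf by simp
  qed
  have two: "(p1\<noteq>0 \<and> p2\<noteq>0) \<or> (p1\<noteq>0 \<and> p3\<noteq>0) \<or> (p2\<noteq>0 \<and> p3\<noteq>0)"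
  proof (rule ccontr)
    assume nt: "\<not> ?thesis"
    have nz: "p1 \<noteq> 0 \<or> p2 \<noteq> 0 \<or> p3 \<noteq> 0"
      using S q16 q25 q34 by auto
    show False
    proof -
      { assume "p1 \<noteq> 0" hence "p2 = 0" "p3 = 0" using nt by auto
        hence "H1*p1^2 = 0" using sumH by simp
        hence "H1 = 0" using \<open>p1 \<noteq> 0\<close> by simp
        hence "p6 = 0" using E(1) d by simp
        hence False using q16 \<open>p1 \<noteq> 0\<close> by simp }
      moreover
      { assume "p2 \<noteq> 0" hence "p1 = 0" "p3 = 0" using nt by auto
        hence "H2*p2^2 = 0" using sumH by simp
        hence "H2 = 0" using \<open>p2 \<noteq> 0\<close> by simp
        hence "p5 = 0" using E(2) d by simp
        hence False using q25 \<open>p2 \<noteq> 0\<close> by simp }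
      moreover
      { assume "p3 \<noteq> 0" hence "p1 = 0" "p2 = 0" using nt by auto
        hence "H3*p3^2 = 0" using sumH by simp
        hence "H3 = 0" using \<open>p3 \<noteq> 0\<close> by simp
        hence "p4 = 0" using E(3) d by simp
        hence False using q34 \<open>p3 \<noteq> 0\<close> by simp }
      ultimately show False using nz by blast
    qed
  qed
  have b: "b \<noteq> 0"
  proof
    assume b0: "b = 0"
    hence a: "a \<noteq> 0" using ab by simp
    have k12: "H1*H6 - H2*H5 = a^2*((e 4 - e 1)*(e 2 - e 3))"
      unfolding H1_def H2_def H5_def H6_def b0 by (simp add: algebra_simps power2_eq_square)
    have k13: "H1*H6 - H3*H4 = a^2*((e 2 - e 4)*(e 3 - e 1))"
      unfolding H1_def H3_def H4_def H6_def b0 by (simp add: algebra_simps power2_eq_square)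
    have k23: "H2*H5 - H3*H4 = a^2*((e 2 - e 1)*(e 3 - e 4))"
      unfolding H2_def H3_def H4_def H5_def b0 by (simp add: algebra_simps power2_eq_square)
    have "(e 4 - e 1)*(e 2 - e 3) \<noteq> 0" "(e 2 - e 4)*(e 3 - e 1) \<noteq> 0" "(e 2 - e 1)*(e 3 - e 4) \<noteq> 0"
      using o1 o2 o3 by auto
    thus False using two P1 P2 P3 k12 k13 k23 a by auto
  qed
  define t where "t = -a/b"
  have at: "a = -b*t" using b unfolding t_def by simp
  define g where "g = b*t^2 + c"
  define Q1 where "Q1 = (t - e 3)*(t - e 4)"
  define Q2 where "Q2 = (t - e 2)*(t - e 4)"
  define Q3 where "Q3 = (t - e 2)*(t - e 3)"
  define Q4 where "Q4 = (t - e 1)*(t - e 4)"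
  define Q5 where "Q5 = (t - e 1)*(t - e 3)"
  define Q6 where "Q6 = (t - e 1)*(t - e 2)"
  have HQ: "H1 = b*Q1 - g" "H2 = b*Q2 - g" "H3 = b*Q3 - g" "H4 = b*Q4 - g" "H5 = b*Q5 - g" "H6 = b*Q6 - g"
    unfolding H1_def H2_def H3_def H4_def H5_def H6_def Q1_def Q2_def Q3_def Q4_def Q5_def Q6_def g_def at
    by (simp_all add: algebra_simps power2_eq_square)
  have g0: "g = 0"
  proof -
    have k12: "H1*H6 - H2*H5 = -g*b*((e 4 - e 1)*(e 3 - e 2))"
      unfolding HQ Q1_def Q2_def Q5_def Q6_def by (simp add: algebra_simps power2_eq_square)
    have k13: "H1*H6 - H3*H4 = -g*b*((e 3 - e 1)*(e 4 - e 2))"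
      unfolding HQ Q1_def Q3_def Q4_def Q6_def by (simp add: algebra_simps power2_eq_square)
    have k23: "H2*H5 - H3*H4 = -g*b*((e 2 - e 1)*(e 4 - e 3))"
      unfolding HQ Q2_def Q3_def Q4_def Q5_def by (simp add: algebra_simps power2_eq_square)
    have "(e 4 - e 1)*(e 3 - e 2) \<noteq> 0" "(e 3 - e 1)*(e 4 - e 2) \<noteq> 0" "(e 2 - e 1)*(e 4 - e 3) \<noteq> 0"
      using o1 o2 o3 by auto
    thus ?thesis using two P1 P2 P3 k12 k13 k23 b by auto
  qed
  note HQ' = HQ[unfolded g0, simplified]
  have Ft: "t^2 - t*\<eta>1 + \<eta>2 = 0"
  proof -
    have "b*(t^2 - t*\<eta>1 + \<eta>2) = p1*(H1*p1) + p2*(H2*p2) + p3*(H3*p3) + p4*(H4*p4) + p5*(H5*p5) + p6*(H6*p6)"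
      unfolding HQ' h1 h2 Q1_def Q2_def Q3_def Q4_def Q5_def Q6_def using S by algebra
    also have "\<dots> = 2*d*(p1*p6 - p2*p5 + p3*p4)" using E by (simp add: algebra_simps)
    finally show ?thesis using Pf b by simp
  qed
  have eta1: "\<eta>1 = 2*t"
  proof -
    have "d*(2*t - \<eta>1) = p1*(2*t - (e 3+e 4))*(d*p1) + p2*(2*t - (e 2+e 4))*(d*p2) + p3*(2*t - (e 2+e 3))*(d*p3)
       + p4*(2*t - (e 1+e 4))*(d*p4) + p5*(2*t - (e 1+e 3))*(d*p5) + p6*(2*t - (e 1+e 2))*(d*p6)"
      unfolding h1 using S by algebra
    also have "\<dots> = p1*(2*t - (e 3+e 4))*(H6*p6) + p2*(2*t - (e 2+e 4))*(-H5*p5) + p3*(2*t - (e 2+e 3))*(H4*p4)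
       + p4*(2*t - (e 1+e 4))*(H3*p3) + p5*(2*t - (e 1+e 3))*(-H2*p2) + p6*(2*t - (e 1+e 2))*(H1*p1)"
      using E by simp
    also have "\<dots> = b*(4*t^3 - 3*t^2*(e 1+e 2+e 3+e 4) + 2*t*(e 1*e 2+e 1*e 3+e 1*e 4+e 2*e 3+e 2*e 4+e 3*e 4)
        - (e 1*e 2*e 3+e 1*e 2*e 4+e 1*e 3*e 4+e 2*e 3*e 4))*(p1*p6 - p2*p5 + p3*p4)"
      unfolding HQ' Q1_def Q2_def Q3_def Q4_def Q5_def Q6_def by algebra
    finally show ?thesis using Pf d by simp
  qed
  have Ppos: "Q1*Q6 > 0"
  proof -
    obtain HH where "HH = d^2" "b^2*(Q1*Q6) = HH \<or> b^2*(Q2*Q5) = HH \<or> b^2*(Q3*Q4) = HH"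
      using two P1 P2 P3 HQ' by (auto simp: power2_eq_square algebra_simps)
    moreover have "Q2*Q5 = Q1*Q6" "Q3*Q4 = Q1*Q6"
      unfolding Q1_def Q2_def Q3_def Q4_def Q5_def Q6_def by (simp_all add: algebra_simps)
    ultimately have "b^2*(Q1*Q6) = d^2" by auto
    moreover have "d^2 > 0" using d by simp
    ultimately show ?thesis using b
      by (metis zero_less_mult_pos zero_less_power2 power_not_zero)
  qed
  have pos3: "Q1 > 0 \<and> Q2 > 0 \<and> Q3 > 0 \<Longrightarrow> False"
  proof -
    assume A: "Q1 > 0 \<and> Q2 > 0 \<and> Q3 > 0"
    have "b*(Q1*p1^2 + Q2*p2^2 + Q3*p3^2) = 0" using sumH unfolding HQ' by (simp add: algebra_simps)
    hence z: "Q1*p1^2 + Q2*p2^2 + Q3*p3^2 = 0" using b by simp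
    have "Q1*p1^2 \<ge> 0" "Q2*p2^2 \<ge> 0" "Q3*p3^2 \<ge> 0" using A by auto
    hence "Q1*p1^2 = 0" "Q2*p2^2 = 0" "Q3*p3^2 = 0" using z by linarith+
    hence "p1 = 0" "p2 = 0" "p3 = 0" using A by auto
    thus False using two by simp
  qed
  have t2: "e 2 \<le> t"
  proof (rule ccontr)
    assume "\<not> e 2 \<le> t"
    hence lt: "t < e 2" by simp
    show False
    proof (cases "t < e 1")
      case True
      have "Q1 > 0" "Q2 > 0" "Q3 > 0" unfolding Q1_def Q2_def Q3_def
        using True o1 o2 o3 by (auto intro!: mult_neg_neg)
      thus False using pos3 by blast
    next
      case False
      have "Q1 > 0" unfolding Q1_def using lt o1 o2 o3 by (auto intro!: mult_neg_neg)
      moreover have "Q6 \<le> 0" unfolding Q6_def using lt False by (auto intro!: mult_nonneg_nonpos)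
      ultimately have "Q1*Q6 \<le> 0" by (metis less_imp_le mult_nonneg_nonpos)
      thus False using Ppos by simp
    qed
  qed
  have t3: "t \<le> e 3"
  proof (rule ccontr)
    assume "\<not> t \<le> e 3"
    hence lt: "e 3 < t" by simp
    show False
    proof (cases "e 4 < t")
      case True
      have "Q1 > 0" "Q2 > 0" "Q3 > 0" unfolding Q1_def Q2_def Q3_def
        using True o1 o2 o3 by auto
      thus False using pos3 by blast
    next
      case False
      have "Q6 > 0" unfolding Q6_def using lt o1 o2 o3 by auto
      moreover have "Q1 \<le> 0" unfolding Q1_def using lt False by (auto intro!: mult_nonneg_nonpos)
      ultimately have "Q1*Q6 \<le> 0" by (metis less_imp_le mult_nonpos_nonneg)
      thus False using Ppos by simp
    qed
  qed
  have "\<eta>2 = t^2" using Ft eta1 by (simp add: power2_eq_square algebra_simps)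
  thus ?thesis using t2 t3 eta1 by blast
qed

lemma vec_nth_deriv[derivative_intros]: "((\<lambda>x::real^'n. x$i) has_derivative (\<lambda>x. x$i)) F"
  by (rule bounded_linear_imp_has_derivative) (rule bounded_linear_vec_nth)

lemma cas1_deriv: "((\<lambda>L::real^6. (L$1)^2 + (L$2)^2 + (L$3)^2 + (L$4)^2 + (L$5)^2 + (L$6)^2) has_derivative
   (\<lambda>v. 2 * (p$1 * v$1 + p$2 * v$2 + p$3 * v$3 + p$4 * v$4 + p$5 * v$5 + p$6 * v$6))) (at p)"
  apply (intro derivative_eq_intros)
  apply (rule refl)+
  apply (simp add: fun_eq_iff algebra_simps)
  done

lemma cas2_deriv: "((\<lambda>L::real^6. L$1 * L$6 - L$2 * L$5 + L$3 * L$4) has_derivative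
   (\<lambda>v. p$1 * v$6 + v$1 * p$6 - (p$2 * v$5 + v$2 * p$5) + p$3 * v$4 + v$3 * p$4)) (at p)"
  apply (intro derivative_eq_intros)
  apply (rule refl)+
  apply (simp add: fun_eq_iff algebra_simps)
  done

lemma cas_fun: "casimirs = (\<lambda>L. ((L$1)^2 + (L$2)^2 + (L$3)^2 + (L$4)^2 + (L$5)^2 + (L$6)^2, L$1 * L$6 - L$2 * L$5 + L$3 * L$4))"
  by (simp add: fun_eq_iff casimirs_def)

lemma cas_deriv: "frechet_derivative casimirs (at p) = (\<lambda>v. (2 * (p$1 * v$1 + p$2 * v$2 + p$3 * v$3 + p$4 * v$4 + p$5 * v$5 + p$6 * v$6),
   p$1 * v$6 + v$1 * p$6 - (p$2 * v$5 + v$2 * p$5) + p$3 * v$4 + v$3 * p$4))"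
proof -
  have "(casimirs has_derivative (\<lambda>v. (2 * (p$1 * v$1 + p$2 * v$2 + p$3 * v$3 + p$4 * v$4 + p$5 * v$5 + p$6 * v$6),
   p$1 * v$6 + v$1 * p$6 - (p$2 * v$5 + v$2 * p$5) + p$3 * v$4 + v$3 * p$4))) (at p)"
    unfolding cas_fun by (rule has_derivative_Pair[OF cas1_deriv cas2_deriv])
  then show ?thesis by (rule frechet_derivative_at[symmetric])
qed

lemma EM_fun: "EM e = (\<lambda>L. (eta1 e L, eta2 e L))" by (simp add: fun_eq_iff EM_def)

lemma eta1_deriv: "(eta1 e has_derivative (\<lambda>v.
  2 * (p$1 * v$1 * (e 3 + e 4) + p$2 * v$2 * (e 2 + e 4) + p$3 * v$3 * (e 2 + e 3) + p$4 * v$4 * (e 1 + e 4) + p$5 * v$5 * (e 1 + e 3) + p$6 * v$6 * (e 1 + e 2)))) (at p)"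
  unfolding eta1_def[abs_def]
  apply (intro derivative_eq_intros)
  apply (rule refl)+
  apply (simp add: fun_eq_iff algebra_simps)
  done

lemma eta2_deriv: "(eta2 e has_derivative (\<lambda>v.
  2 * (p$1 * v$1 * (e 3 * e 4) + p$2 * v$2 * (e 2 * e 4) + p$3 * v$3 * (e 2 * e 3) + p$4 * v$4 * (e 1 * e 4) + p$5 * v$5 * (e 1 * e 3) + p$6 * v$6 * (e 1 * e 2)))) (at p)"
  unfolding eta2_def[abs_def]
  apply (intro derivative_eq_intros)
  apply (rule refl)+
  apply (simp add: fun_eq_iff algebra_simps)
  done

lemma em_deriv: "frechet_derivative (EM e) (at p) = (\<lambda>v.
  (2 * (p$1 * v$1 * (e 3 + e 4) + p$2 * v$2 * (e 2 + e 4) + p$3 * v$3 * (e 2 + e 3) + p$4 * v$4 * (e 1 + e 4) + p$5 * v$5 * (e 1 + e 3) + p$6 * v$6 * (e 1 + e 2)),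
   2 * (p$1 * v$1 * (e 3 * e 4) + p$2 * v$2 * (e 2 * e 4) + p$3 * v$3 * (e 2 * e 3) + p$4 * v$4 * (e 1 * e 4) + p$5 * v$5 * (e 1 * e 3) + p$6 * v$6 * (e 1 * e 2))))"
proof -
  have "(EM e has_derivative (\<lambda>v.
  (2 * (p$1 * v$1 * (e 3 + e 4) + p$2 * v$2 * (e 2 + e 4) + p$3 * v$3 * (e 2 + e 3) + p$4 * v$4 * (e 1 + e 4) + p$5 * v$5 * (e 1 + e 3) + p$6 * v$6 * (e 1 + e 2)),
   2 * (p$1 * v$1 * (e 3 * e 4) + p$2 * v$2 * (e 2 * e 4) + p$3 * v$3 * (e 2 * e 3) + p$4 * v$4 * (e 1 * e 4) + p$5 * v$5 * (e 1 * e 3) + p$6 * v$6 * (e 1 * e 2))))) (at p)"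
    unfolding EM_fun by (rule has_derivative_Pair[OF eta1_deriv eta2_deriv])
  then show ?thesis by (rule frechet_derivative_at[symmetric])
qed

lemma annih:
  fixes D1 D2 :: "'a::real_vector \<Rightarrow> real"
  assumes T: "\<And>u w x y. u \<in> T \<Longrightarrow> w \<in> T \<Longrightarrow> x *\<^sub>R u + y *\<^sub>R w \<in> T"
    and L1: "\<And>u w x y. D1 (x *\<^sub>R u + y *\<^sub>R w) = x * D1 u + y * D1 w"
    and L2: "\<And>u w x y. D2 (x *\<^sub>R u + y *\<^sub>R w) = x * D2 u + y * D2 w"
    and ne: "(\<lambda>v. (D1 v, D2 v)) ` T \<noteq> UNIV"
  shows "\<exists>\<alpha> \<beta>. (\<alpha> \<noteq> 0 \<or> \<beta> \<noteq> 0) \<and> (\<forall>v\<in>T. \<alpha> * D1 v + \<beta> * D2 v = 0)"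
proof (rule ccontr)
  assume H: "\<not> ?thesis"
  hence H': "\<And>\<alpha> \<beta>. \<alpha> \<noteq> 0 \<or> \<beta> \<noteq> 0 \<Longrightarrow> \<exists>v\<in>T. \<alpha> * D1 v + \<beta> * D2 v \<noteq> 0" by blast
  obtain u where u: "u \<in> T" "D1 u \<noteq> 0" using H'[of 1 0] by auto
  obtain w where w: "w \<in> T" "D2 u * D1 w + (- D1 u) * D2 w \<noteq> 0" using H'[of "D2 u" "- D1 u"] u by auto
  define \<Delta> where "\<Delta> = D1 u * D2 w - D2 u * D1 w"
  have \<Delta>: "\<Delta> \<noteq> 0" using w unfolding \<Delta>_def by (simp add: algebra_simps)
  have "z \<in> (\<lambda>v. (D1 v, D2 v)) ` T" for z
  proof -
    obtain x y where z: "z = (x, y)" by (cases z)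
    define l where "l = (x * D2 w - y * D1 w) / \<Delta>"
    define m where "m = (y * D1 u - x * D2 u) / \<Delta>"
    have "l *\<^sub>R u + m *\<^sub>R w \<in> T" using T u w by blast
    moreover have "D1 (l *\<^sub>R u + m *\<^sub>R w) = x"
    proof -
      have "D1 (l *\<^sub>R u + m *\<^sub>R w) = ((x * D2 w - y * D1 w) * D1 u + (y * D1 u - x * D2 u) * D1 w) / \<Delta>"
        unfolding L1 l_def m_def by (simp add: add_divide_distrib)
      also have "(x * D2 w - y * D1 w) * D1 u + (y * D1 u - x * D2 u) * D1 w = x * \<Delta>"
        unfolding \<Delta>_def by (simp add: algebra_simps)
      finally show ?thesis using \<Delta> by simp
    qed
    moreover have "D2 (l *\<^sub>R u + m *\<^sub>R w) = y"
    proof -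
      have "D2 (l *\<^sub>R u + m *\<^sub>R w) = ((x * D2 w - y * D1 w) * D2 u + (y * D1 u - x * D2 u) * D2 w) / \<Delta>"
        unfolding L2 l_def m_def by (simp add: add_divide_distrib)
      also have "(x * D2 w - y * D1 w) * D2 u + (y * D1 u - x * D2 u) * D2 w = y * \<Delta>"
        unfolding \<Delta>_def by (simp add: algebra_simps)
      finally show ?thesis using \<Delta> by simp
    qed
    ultimately show ?thesis unfolding z by force
  qed
  thus False using ne by auto
qed




definition mk6 :: "real \<Rightarrow> real \<Rightarrow> real \<Rightarrow> real \<Rightarrow> real \<Rightarrow> real \<Rightarrow> real^6" where
 "mk6 a b c d e f = (\<chi> i. if i = 1 then a else if i = 2 then b else if i = 3 then c else if i = 4 then d else if i = 5 then e else f)"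

lemma mk6_nth[simp]: "mk6 a b c d e f $ 1 = a" "mk6 a b c d e f $ 2 = b" "mk6 a b c d e f $ 3 = c"
 "mk6 a b c d e f $ 4 = d" "mk6 a b c d e f $ 5 = e" "mk6 a b c d e f $ 6 = f"
  by (simp_all add: mk6_def)

lemma Mh_iff: "p \<in> Mh \<longleftrightarrow> (p$1)^2 + (p$2)^2 + (p$3)^2 + (p$4)^2 + (p$5)^2 + (p$6)^2 = 1
   \<and> p$1 * p$6 - p$2 * p$5 + p$3 * p$4 = 0"
  by (simp add: Mh_def casimirs_def)

lemma tangent_iff: "v \<in> tangent_space p \<longleftrightarrow>
   p$1 * v$1 + p$2 * v$2 + p$3 * v$3 + p$4 * v$4 + p$5 * v$5 + p$6 * v$6 = 0 \<and>
   p$1 * v$6 + v$1 * p$6 - (p$2 * v$5 + v$2 * p$5) + p$3 * v$4 + v$3 * p$4 = 0"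
  unfolding tangent_space_def cas_deriv mem_Collect_eq zero_prod_def prod.inject mult_eq_0_iff by simp

lemma crit_imp:
  assumes "critical_point e p"
  shows "\<exists>a b c d. (a \<noteq> 0 \<or> b \<noteq> 0) \<and>
    (a*(e 3+e 4) + b*(e 3*e 4) - c)*p$1 = d*p$6 \<and>
    (a*(e 2+e 4) + b*(e 2*e 4) - c)*p$2 = -d*p$5 \<and>
    (a*(e 2+e 3) + b*(e 2*e 3) - c)*p$3 = d*p$4 \<and>
    (a*(e 1+e 4) + b*(e 1*e 4) - c)*p$4 = d*p$3 \<and>
    (a*(e 1+e 3) + b*(e 1*e 3) - c)*p$5 = -d*p$2 \<and>
    (a*(e 1+e 2) + b*(e 1*e 2) - c)*p$6 = d*p$1"
proof -
  from assms have M: "p \<in> Mh" and ne: "frechet_derivative (EM e) (at p) ` tangent_space p \<noteq> UNIV"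
    unfolding critical_point_def by auto
  from M have S: "(p$1)^2 + (p$2)^2 + (p$3)^2 + (p$4)^2 + (p$5)^2 + (p$6)^2 = 1"
    and Pf: "p$1 * p$6 - p$2 * p$5 + p$3 * p$4 = 0" by (auto simp: Mh_iff)
  define D1 where "D1 = (\<lambda>v::real^6. 2 * (p$1 * v$1 * (e 3 + e 4) + p$2 * v$2 * (e 2 + e 4) + p$3 * v$3 * (e 2 + e 3) + p$4 * v$4 * (e 1 + e 4) + p$5 * v$5 * (e 1 + e 3) + p$6 * v$6 * (e 1 + e 2)))"
  define D2 where "D2 = (\<lambda>v::real^6. 2 * (p$1 * v$1 * (e 3 * e 4) + p$2 * v$2 * (e 2 * e 4) + p$3 * v$3 * (e 2 * e 3) + p$4 * v$4 * (e 1 * e 4) + p$5 * v$5 * (e 1 * e 3) + p$6 * v$6 * (e 1 * e 2)))"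
  have ne': "(\<lambda>v. (D1 v, D2 v)) ` tangent_space p \<noteq> UNIV"
    using ne unfolding em_deriv D1_def D2_def .
  have T: "x *\<^sub>R u + y *\<^sub>R w \<in> tangent_space p" if "u \<in> tangent_space p" "w \<in> tangent_space p" for u w x y
  proof -
    from that have u: "p$1 * u$1 + p$2 * u$2 + p$3 * u$3 + p$4 * u$4 + p$5 * u$5 + p$6 * u$6 = 0"
      "p$1 * u$6 + u$1 * p$6 - (p$2 * u$5 + u$2 * p$5) + p$3 * u$4 + u$3 * p$4 = 0"
      and w: "p$1 * w$1 + p$2 * w$2 + p$3 * w$3 + p$4 * w$4 + p$5 * w$5 + p$6 * w$6 = 0"
      "p$1 * w$6 + w$1 * p$6 - (p$2 * w$5 + w$2 * p$5) + p$3 * w$4 + w$3 * p$4 = 0"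
      by (auto simp: tangent_iff)
    have "p$1 * (x * u$1 + y * w$1) + p$2 * (x * u$2 + y * w$2) + p$3 * (x * u$3 + y * w$3) + p$4 * (x * u$4 + y * w$4) + p$5 * (x * u$5 + y * w$5) + p$6 * (x * u$6 + y * w$6)
      = x * (p$1 * u$1 + p$2 * u$2 + p$3 * u$3 + p$4 * u$4 + p$5 * u$5 + p$6 * u$6) + y * (p$1 * w$1 + p$2 * w$2 + p$3 * w$3 + p$4 * w$4 + p$5 * w$5 + p$6 * w$6)"
      by (simp add: algebra_simps)
    moreover have "p$1 * (x * u$6 + y * w$6) + (x * u$1 + y * w$1) * p$6 - (p$2 * (x * u$5 + y * w$5) + (x * u$2 + y * w$2) * p$5) + p$3 * (x * u$4 + y * w$4) + (x * u$3 + y * w$3) * p$4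
      = x * (p$1 * u$6 + u$1 * p$6 - (p$2 * u$5 + u$2 * p$5) + p$3 * u$4 + u$3 * p$4) + y * (p$1 * w$6 + w$1 * p$6 - (p$2 * w$5 + w$2 * p$5) + p$3 * w$4 + w$3 * p$4)"
      by (simp add: algebra_simps)
    ultimately show ?thesis using u w by (simp add: tangent_iff)
  qed
  have L1: "D1 (x *\<^sub>R u + y *\<^sub>R w) = x * D1 u + y * D1 w" for u w x y
    unfolding D1_def by (simp add: algebra_simps)
  have L2: "D2 (x *\<^sub>R u + y *\<^sub>R w) = x * D2 u + y * D2 w" for u w x y
    unfolding D2_def by (simp add: algebra_simps)
  obtain \<alpha> \<beta> where ab: "\<alpha> \<noteq> 0 \<or> \<beta> \<noteq> 0" and ann: "\<And>v. v \<in> tangent_space p \<Longrightarrow> \<alpha> * D1 v + \<beta> * D2 v = 0"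
    using annih[of "tangent_space p" D1 D2, OF T L1 L2 ne'] by blast
  define g1 where "g1 = (\<alpha>*(e 3+e 4) + \<beta>*(e 3*e 4))*p$1"
  define g2 where "g2 = (\<alpha>*(e 2+e 4) + \<beta>*(e 2*e 4))*p$2"
  define g3 where "g3 = (\<alpha>*(e 2+e 3) + \<beta>*(e 2*e 3))*p$3"
  define g4 where "g4 = (\<alpha>*(e 1+e 4) + \<beta>*(e 1*e 4))*p$4"
  define g5 where "g5 = (\<alpha>*(e 1+e 3) + \<beta>*(e 1*e 3))*p$5"
  define g6 where "g6 = (\<alpha>*(e 1+e 2) + \<beta>*(e 1*e 2))*p$6"
  define c where "c = g1*p$1 + g2*p$2 + g3*p$3 + g4*p$4 + g5*p$5 + g6*p$6"
  define d where "d = g1*p$6 - g2*p$5 + g3*p$4 + g4*p$3 - g5*p$2 + g6*p$1"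
  define w where "w = mk6 (g1 - c*p$1 - d*p$6) (g2 - c*p$2 + d*p$5) (g3 - c*p$3 - d*p$4)
                          (g4 - c*p$4 - d*p$3) (g5 - c*p$5 + d*p$2) (g6 - c*p$6 - d*p$1)"
  have w1: "p$1 * w$1 + p$2 * w$2 + p$3 * w$3 + p$4 * w$4 + p$5 * w$5 + p$6 * w$6 = 0"
  proof -
    have "p$1 * w$1 + p$2 * w$2 + p$3 * w$3 + p$4 * w$4 + p$5 * w$5 + p$6 * w$6
        = c * (1 - ((p$1)^2 + (p$2)^2 + (p$3)^2 + (p$4)^2 + (p$5)^2 + (p$6)^2)) - 2 * d * (p$1 * p$6 - p$2 * p$5 + p$3 * p$4)"
      unfolding w_def c_def by (simp add: algebra_simps power2_eq_square)
    thus ?thesis using S Pf by simp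
  qed
  have w2: "p$1 * w$6 + w$1 * p$6 - (p$2 * w$5 + w$2 * p$5) + p$3 * w$4 + w$3 * p$4 = 0"
  proof -
    have "p$1 * w$6 + w$1 * p$6 - (p$2 * w$5 + w$2 * p$5) + p$3 * w$4 + w$3 * p$4
        = d * (1 - ((p$1)^2 + (p$2)^2 + (p$3)^2 + (p$4)^2 + (p$5)^2 + (p$6)^2)) - 2 * c * (p$1 * p$6 - p$2 * p$5 + p$3 * p$4)"
      unfolding w_def d_def by (simp add: algebra_simps power2_eq_square)
    thus ?thesis using S Pf by simp
  qed
  have wT: "w \<in> tangent_space p" using w1 w2 by (simp add: tangent_iff)
  have gw: "g1 * w$1 + g2 * w$2 + g3 * w$3 + g4 * w$4 + g5 * w$5 + g6 * w$6 = 0"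
  proof -
    have "\<alpha> * D1 w + \<beta> * D2 w = 2 * (g1 * w$1 + g2 * w$2 + g3 * w$3 + g4 * w$4 + g5 * w$5 + g6 * w$6)"
      unfolding D1_def D2_def g1_def g2_def g3_def g4_def g5_def g6_def by (simp add: algebra_simps)
    thus ?thesis using ann[OF wT] by simp
  qed
  have "(w$1)^2 + (w$2)^2 + (w$3)^2 + (w$4)^2 + (w$5)^2 + (w$6)^2
      = (g1 * w$1 + g2 * w$2 + g3 * w$3 + g4 * w$4 + g5 * w$5 + g6 * w$6)
        - c * (p$1 * w$1 + p$2 * w$2 + p$3 * w$3 + p$4 * w$4 + p$5 * w$5 + p$6 * w$6)
        - d * (p$1 * w$6 + w$1 * p$6 - (p$2 * w$5 + w$2 * p$5) + p$3 * w$4 + w$3 * p$4)"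
    by (simp add: w_def algebra_simps power2_eq_square)
  hence sq: "(w$1)^2 + (w$2)^2 + (w$3)^2 + (w$4)^2 + (w$5)^2 + (w$6)^2 = 0" using gw w1 w2 by simp
  have "(w$1)^2 = 0" "(w$2)^2 = 0" "(w$3)^2 = 0" "(w$4)^2 = 0" "(w$5)^2 = 0" "(w$6)^2 = 0"
    using sq zero_le_power2[of "w$1"] zero_le_power2[of "w$2"] zero_le_power2[of "w$3"]
      zero_le_power2[of "w$4"] zero_le_power2[of "w$5"] zero_le_power2[of "w$6"] by linarith+
  hence z: "w$1 = 0" "w$2 = 0" "w$3 = 0" "w$4 = 0" "w$5 = 0" "w$6 = 0" by simp_all
  show ?thesis
    apply (rule exI[of _ \<alpha>], rule exI[of _ \<beta>], rule exI[of _ c], rule exI[of _ d])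
    using ab z unfolding w_def g1_def g2_def g3_def g4_def g5_def g6_def
    by (simp add: algebra_simps)
qed

lemma crit_suff:
  assumes S: "(p$1)^2 + (p$2)^2 + (p$3)^2 + (p$4)^2 + (p$5)^2 + (p$6)^2 = 1"
    and Pf: "p$1 * p$6 - p$2 * p$5 + p$3 * p$4 = 0"
    and ab: "a \<noteq> 0 \<or> b \<noteq> 0"
    and E1: "(a*(e 3+e 4) + b*(e 3*e 4) - c)*p$1 = d*p$6"
    and E2: "(a*(e 2+e 4) + b*(e 2*e 4) - c)*p$2 = -d*p$5"
    and E3: "(a*(e 2+e 3) + b*(e 2*e 3) - c)*p$3 = d*p$4"
    and E4: "(a*(e 1+e 4) + b*(e 1*e 4) - c)*p$4 = d*p$3"
    and E5: "(a*(e 1+e 3) + b*(e 1*e 3) - c)*p$5 = -d*p$2"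
    and E6: "(a*(e 1+e 2) + b*(e 1*e 2) - c)*p$6 = d*p$1"
  shows "critical_point e p"
proof -
  have M: "p \<in> Mh" using S Pf by (simp add: Mh_iff)
  have "(a, b) \<notin> frechet_derivative (EM e) (at p) ` tangent_space p"
  proof
    assume "(a, b) \<in> frechet_derivative (EM e) (at p) ` tangent_space p"
    then obtain v where v: "v \<in> tangent_space p" and ev: "(a, b) = frechet_derivative (EM e) (at p) v" by auto
    from v have t1: "p$1 * v$1 + p$2 * v$2 + p$3 * v$3 + p$4 * v$4 + p$5 * v$5 + p$6 * v$6 = 0"
      and t2: "p$1 * v$6 + v$1 * p$6 - (p$2 * v$5 + v$2 * p$5) + p$3 * v$4 + v$3 * p$4 = 0"
      by (auto simp: tangent_iff)
    from ev have a: "a = 2 * (p$1 * v$1 * (e 3 + e 4) + p$2 * v$2 * (e 2 + e 4) + p$3 * v$3 * (e 2 + e 3) + p$4 * v$4 * (e 1 + e 4) + p$5 * v$5 * (e 1 + e 3) + p$6 * v$6 * (e 1 + e 2))"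
      and b: "b = 2 * (p$1 * v$1 * (e 3 * e 4) + p$2 * v$2 * (e 2 * e 4) + p$3 * v$3 * (e 2 * e 3) + p$4 * v$4 * (e 1 * e 4) + p$5 * v$5 * (e 1 * e 3) + p$6 * v$6 * (e 1 * e 2))"
      by (simp_all add: em_deriv)
    have "a*a + b*b = 2 * (((a*(e 3+e 4) + b*(e 3*e 4) - c)*p$1) * v$1 + ((a*(e 2+e 4) + b*(e 2*e 4) - c)*p$2) * v$2
       + ((a*(e 2+e 3) + b*(e 2*e 3) - c)*p$3) * v$3 + ((a*(e 1+e 4) + b*(e 1*e 4) - c)*p$4) * v$4
       + ((a*(e 1+e 3) + b*(e 1*e 3) - c)*p$5) * v$5 + ((a*(e 1+e 2) + b*(e 1*e 2) - c)*p$6) * v$6)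
       + 2 * c * (p$1 * v$1 + p$2 * v$2 + p$3 * v$3 + p$4 * v$4 + p$5 * v$5 + p$6 * v$6)"
      apply (subst (1) a, subst (2) b) by (simp add: algebra_simps)
    also have "\<dots> = 2 * d * (p$1 * v$6 + v$1 * p$6 - (p$2 * v$5 + v$2 * p$5) + p$3 * v$4 + v$3 * p$4)
       + 2 * c * (p$1 * v$1 + p$2 * v$2 + p$3 * v$3 + p$4 * v$4 + p$5 * v$5 + p$6 * v$6)"
      unfolding E1 E2 E3 E4 E5 E6 by (simp add: algebra_simps)
    also have "\<dots> = 0" using t1 t2 by simp
    finally have "a*a + b*b = 0" .
    thus False using ab by (metis add_nonneg_eq_0_iff mult_eq_0_iff zero_le_square)
  qed
  hence "frechet_derivative (EM e) (at p) ` tangent_space p \<noteq> UNIV" by auto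
  thus ?thesis using M unfolding critical_point_def by auto
qed

lemma fam_inf:
  assumes "\<And>r. r \<in> {0..1::real} \<Longrightarrow> critical_point e (f r) \<and> EM e (f r) \<in> Lline e i"
    and "inj_on (\<lambda>r. fst (EM e (f r))) {0..1}"
  shows "infinite (critical_values e \<inter> Lline e i)"
proof
  assume fin: "finite (critical_values e \<inter> Lline e i)"
  have "(\<lambda>r. EM e (f r)) ` {0..1} \<subseteq> critical_values e \<inter> Lline e i"
    using assms(1) unfolding critical_values_def by auto
  hence "finite ((\<lambda>r. EM e (f r)) ` {0..1})" using fin finite_subset by blast
  hence "finite (fst ` (\<lambda>r. EM e (f r)) ` {0..1})" by simp
  hence "finite ((\<lambda>r. fst (EM e (f r))) ` {0..1})" by (simp add: image_image)
  hence "finite {0..1::real}" using finite_imageD assms(2) by blast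
  thus False using infinite_Icc[of "0::real" 1] by simp
qed

lemma EM_mk6: "EM e (mk6 x1 x2 x3 x4 x5 x6) = (x1^2*(e 3+e 4) + x2^2*(e 2+e 4) + x3^2*(e 2+e 3) + x4^2*(e 1+e 4) + x5^2*(e 1+e 3) + x6^2*(e 1+e 2),
  x1^2*(e 3*e 4) + x2^2*(e 2*e 4) + x3^2*(e 2*e 3) + x4^2*(e 1*e 4) + x5^2*(e 1*e 3) + x6^2*(e 1*e 2))"
  by (simp add: EM_def eta1_def eta2_def)

lemma unit_crit:
  "critical_point e (mk6 1 0 0 0 0 0)" "critical_point e (mk6 0 1 0 0 0 0)" "critical_point e (mk6 0 0 1 0 0 0)"
  "critical_point e (mk6 0 0 0 1 0 0)" "critical_point e (mk6 0 0 0 0 1 0)" "critical_point e (mk6 0 0 0 0 0 1)"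
  by (rule crit_suff[where a=1 and b=0 and d=0]; simp)+

lemma sqrt_fam: "r \<in> {0..1::real} \<Longrightarrow> (sqrt (1 - r))^2 = 1 - r \<and> (sqrt r)^2 = r" by simp




lemma C_crit:
  assumes o1: "e 1 < e 2" and o2: "e 2 < e 3" and o3: "e 3 < e 4" and t: "e 2 \<le> t" "t \<le> e 3"
  shows "(2 * t, t^2) \<in> critical_values e"
proof -
  define ya where "ya = sqrt (t - e 1)"
  define yb where "yb = sqrt (t - e 2)"
  define yc where "yc = sqrt (e 3 - t)"
  define yd where "yd = sqrt (e 4 - t)"
  define yn where "yn = sqrt ((e 4 - e 1) * (e 3 - e 2))"
  define r where "r = 1 / yn"
  have a2: "ya^2 = t - e 1" unfolding ya_def using o1 t by simp
  have b2: "yb^2 = t - e 2" unfolding yb_def using t by simp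
  have c2: "yc^2 = e 3 - t" unfolding yc_def using t by simp
  have d2: "yd^2 = e 4 - t" unfolding yd_def using o3 t by simp
  have n2: "yn^2 = (e 4 - e 1) * (e 3 - e 2)" unfolding yn_def using o1 o2 o3 by simp
  have npos: "yn > 0" unfolding yn_def using o1 o2 o3 by simp
  have rn: "r  *  yn = 1" unfolding r_def using npos by simp
  define p where "p = mk6 (ya * yb * r) (ya * yc * r) 0 0 (yb * yd * r) (yc * yd * r)"
  have crit: "critical_point e p"
    unfolding p_def
    apply (rule crit_suff[where a="-t" and b=1 and c="-(t^2)" and d="ya * yb * yc * yd"])
    using a2 b2 c2 d2 n2 rn by simp_all algebra+
  have "EM e p = (2 * t, t^2)"
    unfolding p_def EM_mk6 using a2 b2 c2 d2 n2 rn by simp algebra+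
  thus ?thesis using crit unfolding critical_values_def by force
qed




lemma Lline_eq: "Lline e i = {(x, y). y - e i * (x - e i) = 0}" by (simp add: Lline_def)

lemma two_lines:
  fixes a b :: real
  assumes "a \<noteq> b"
  shows "{(x, y). y - a * (x - a) = 0} \<inter> {(x, y). y - b * (x - b) = 0} = {(a + b, a * b)}"
proof (rule set_eqI, rule iffI)
  fix z assume "z \<in> {(x, y). y - a * (x - a) = 0} \<inter> {(x, y). y - b * (x - b) = 0}"
  then obtain x y where z: "z = (x, y)" and h1: "y - a * (x - a) = 0" and h2: "y - b * (x - b) = 0" by auto
  have "(a - b) * (x - (a + b)) = (y - b * (x - b)) - (y - a * (x - a))" by (simp add: algebra_simps)
  hence "(a - b) * (x - (a + b)) = 0" using h1 h2 by simp
  hence x: "x = a + b" using assms by simp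
  hence "y = a * b" using h1 by (simp add: algebra_simps)
  thus "z \<in> {(a + b, a * b)}" using z x by simp
next
  fix z assume "z \<in> {(a + b, a * b)}"
  thus "z \<in> {(x, y). y - a * (x - a) = 0} \<inter> {(x, y). y - b * (x - b) = 0}"
    by (auto simp: algebra_simps)
qed

lemma line_C:
  fixes a :: real
  assumes "e 2 \<le> a" "a \<le> e 3"
  shows "{(x, y). y - a * (x - a) = 0} \<inter> Ccurve e = {(2 * a, a^2)}"
proof (rule set_eqI, rule iffI)
  fix z assume "z \<in> {(x, y). y - a * (x - a) = 0} \<inter> Ccurve e"
  then obtain t where z: "z = (2 * t, t^2)" and h: "t^2 - a * (2 * t - a) = 0" unfolding Ccurve_def by auto
  have "(t - a)^2 = t^2 - a * (2 * t - a)" by (simp add: algebra_simps power2_eq_square)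
  hence "t = a" using h by simp
  thus "z \<in> {(2 * a, a^2)}" using z by simp
next
  fix z assume "z \<in> {(2 * a, a^2)}"
  thus "z \<in> {(x, y). y - a * (x - a) = 0} \<inter> Ccurve e"
    using assms unfolding Ccurve_def by (auto simp: algebra_simps power2_eq_square)
qed

lemma line_P:
  fixes a :: real
  shows "{(x, y). y - a * (x - a) = 0} \<inter> parabola = {(2 * a, a^2)}"
proof (rule set_eqI, rule iffI)
  fix z assume "z \<in> {(x, y). y - a * (x - a) = 0} \<inter> parabola"
  then obtain x y where z: "z = (x, y)" and h: "y - a * (x - a) = 0" and p: "y = x^2 / 4"
    unfolding parabola_def by auto
  have "(x / 2 - a)^2 = y - a * (x - a)" using p by (simp add: algebra_simps power2_eq_square)
  hence "x / 2 - a = 0" using h by simp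
  hence x: "x = 2 * a" by simp
  thus "z \<in> {(2 * a, a^2)}" using z p by (simp add: power2_eq_square)
next
  fix z assume "z \<in> {(2 * a, a^2)}"
  thus "z \<in> {(x, y). y - a * (x - a) = 0} \<inter> parabola"
    unfolding parabola_def by (auto simp: algebra_simps power2_eq_square)
qed

lemma inj_lin: "A \<noteq> B \<Longrightarrow> inj_on (\<lambda>r::real. (1 - r) * A + r * B) S"
proof (rule inj_onI)
  fix r s assume ne: "A \<noteq> B" and "(1 - r) * A + r * B = (1 - s) * A + s * B"
  hence "(r - s) * (B - A) = 0" by (simp add: algebra_simps)
  thus "r = s" using ne by simp
qed

lemma fam1: "critical_point e (mk6 0 0 0 0 (sqrt (1 - r)) (sqrt r))"
  if "r \<in> {0..1}" for r :: real
  by (rule crit_suff[where a="- e 1" and b=1 and c="-((e 1)^2)" and d=0])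
     (use that in \<open>simp_all add: algebra_simps power2_eq_square\<close>)
lemma fam2: "critical_point e (mk6 0 (sqrt (1 - r)) (sqrt r) 0 0 0)"
  if "r \<in> {0..1}" for r :: real
  by (rule crit_suff[where a="- e 2" and b=1 and c="-((e 2)^2)" and d=0])
     (use that in \<open>simp_all add: algebra_simps power2_eq_square\<close>)
lemma fam3: "critical_point e (mk6 (sqrt (1 - r)) 0 (sqrt r) 0 0 0)"
  if "r \<in> {0..1}" for r :: real
  by (rule crit_suff[where a="- e 3" and b=1 and c="-((e 3)^2)" and d=0])
     (use that in \<open>simp_all add: algebra_simps power2_eq_square\<close>)
lemma fam4: "critical_point e (mk6 (sqrt (1 - r)) (sqrt r) 0 0 0 0)"
  if "r \<in> {0..1}" for r :: real
  by (rule crit_suff[where a="- e 4" and b=1 and c="-((e 4)^2)" and d=0])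
     (use that in \<open>simp_all add: algebra_simps power2_eq_square\<close>)

lemma inf_lines:
  assumes o1: "e 1 < e 2" and o2: "e 2 < e 3" and o3: "e 3 < e 4"
  shows "infinite (critical_values e \<inter> Lline e 1)" "infinite (critical_values e \<inter> Lline e 2)"
    "infinite (critical_values e \<inter> Lline e 3)" "infinite (critical_values e \<inter> Lline e 4)"
proof -
  show "infinite (critical_values e \<inter> Lline e 1)"
  proof (rule fam_inf[where f="\<lambda>r. mk6 0 0 0 0 (sqrt (1 - r)) (sqrt r)"])
    fix r :: real assume r: "r \<in> {0..1}"
    show "critical_point e (mk6 0 0 0 0 (sqrt (1 - r)) (sqrt r)) \<and> EM e (mk6 0 0 0 0 (sqrt (1 - r)) (sqrt r)) \<in> Lline e 1"
      using fam1[OF r] r by (simp add: EM_mk6 Lline_def algebra_simps power2_eq_square)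
  next
    have "inj_on (\<lambda>r::real. (1 - r) * (e 1 + e 3) + r * (e 1 + e 2)) {0..1}" using o2 by (intro inj_lin) simp
    thus "inj_on (\<lambda>r. fst (EM e (mk6 0 0 0 0 (sqrt (1 - r)) (sqrt r)))) {0..1}"
      by (rule iffD1[OF inj_on_cong, rotated]) (simp add: EM_mk6)
  qed
  show "infinite (critical_values e \<inter> Lline e 2)"
  proof (rule fam_inf[where f="\<lambda>r. mk6 0 (sqrt (1 - r)) (sqrt r) 0 0 0"])
    fix r :: real assume r: "r \<in> {0..1}"
    show "critical_point e (mk6 0 (sqrt (1 - r)) (sqrt r) 0 0 0) \<and> EM e (mk6 0 (sqrt (1 - r)) (sqrt r) 0 0 0) \<in> Lline e 2"
      using fam2[OF r] r by (simp add: EM_mk6 Lline_def algebra_simps power2_eq_square)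
  next
    have "inj_on (\<lambda>r::real. (1 - r) * (e 2 + e 4) + r * (e 2 + e 3)) {0..1}" using o3 by (intro inj_lin) simp
    thus "inj_on (\<lambda>r. fst (EM e (mk6 0 (sqrt (1 - r)) (sqrt r) 0 0 0))) {0..1}"
      by (rule iffD1[OF inj_on_cong, rotated]) (simp add: EM_mk6)
  qed
  show "infinite (critical_values e \<inter> Lline e 3)"
  proof (rule fam_inf[where f="\<lambda>r. mk6 (sqrt (1 - r)) 0 (sqrt r) 0 0 0"])
    fix r :: real assume r: "r \<in> {0..1}"
    show "critical_point e (mk6 (sqrt (1 - r)) 0 (sqrt r) 0 0 0) \<and> EM e (mk6 (sqrt (1 - r)) 0 (sqrt r) 0 0 0) \<in> Lline e 3"
      using fam3[OF r] r by (simp add: EM_mk6 Lline_def algebra_simps power2_eq_square)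
  next
    have "inj_on (\<lambda>r::real. (1 - r) * (e 3 + e 4) + r * (e 2 + e 3)) {0..1}" using o2 o3 by (intro inj_lin) simp
    thus "inj_on (\<lambda>r. fst (EM e (mk6 (sqrt (1 - r)) 0 (sqrt r) 0 0 0))) {0..1}"
      by (rule iffD1[OF inj_on_cong, rotated]) (simp add: EM_mk6)
  qed
  show "infinite (critical_values e \<inter> Lline e 4)"
  proof (rule fam_inf[where f="\<lambda>r. mk6 (sqrt (1 - r)) (sqrt r) 0 0 0 0"])
    fix r :: real assume r: "r \<in> {0..1}"
    show "critical_point e (mk6 (sqrt (1 - r)) (sqrt r) 0 0 0 0) \<and> EM e (mk6 (sqrt (1 - r)) (sqrt r) 0 0 0 0) \<in> Lline e 4"
      using fam4[OF r] r by (simp add: EM_mk6 Lline_def algebra_simps power2_eq_square)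
  next
    have "inj_on (\<lambda>r::real. (1 - r) * (e 3 + e 4) + r * (e 2 + e 4)) {0..1}" using o2 by (intro inj_lin) simp
    thus "inj_on (\<lambda>r. fst (EM e (mk6 (sqrt (1 - r)) (sqrt r) 0 0 0 0))) {0..1}"
      by (rule iffD1[OF inj_on_cong, rotated]) (simp add: EM_mk6)
  qed
qed

lemma dval1: "(e 3 + e 4, e 3 * e 4) \<in> critical_values e"
  unfolding critical_values_def
  by (rule image_eqI[where x="mk6 1 0 0 0 0 0"]) (simp_all add: EM_mk6 unit_crit)
lemma dval2: "(e 2 + e 4, e 2 * e 4) \<in> critical_values e"
  unfolding critical_values_def
  by (rule image_eqI[where x="mk6 0 1 0 0 0 0"]) (simp_all add: EM_mk6 unit_crit)
lemma dval3: "(e 2 + e 3, e 2 * e 3) \<in> critical_values e"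
  unfolding critical_values_def
  by (rule image_eqI[where x="mk6 0 0 1 0 0 0"]) (simp_all add: EM_mk6 unit_crit)
lemma dval4: "(e 1 + e 4, e 1 * e 4) \<in> critical_values e"
  unfolding critical_values_def
  by (rule image_eqI[where x="mk6 0 0 0 1 0 0"]) (simp_all add: EM_mk6 unit_crit)
lemma dval5: "(e 1 + e 3, e 1 * e 3) \<in> critical_values e"
  unfolding critical_values_def
  by (rule image_eqI[where x="mk6 0 0 0 0 1 0"]) (simp_all add: EM_mk6 unit_crit)
lemma dval6: "(e 1 + e 2, e 1 * e 2) \<in> critical_values e"
  unfolding critical_values_def
  by (rule image_eqI[where x="mk6 0 0 0 0 0 1"]) (simp_all add: EM_mk6 unit_crit)




lemma dsym: "(e a + e b, e a * e b) \<in> critical_values e \<Longrightarrow> (e b + e a, e b * e a) \<in> critical_values e"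
  by (simp add: add.commute mult.commute)

lemma four: "i \<in> {1..4::nat} \<Longrightarrow> i = 1 \<or> i = 2 \<or> i = 3 \<or> i = 4" by auto

theorem proposition3:
  fixes e :: "nat \<Rightarrow> real"
  assumes "e 1 < e 2" and "e 2 < e 3" and "e 3 < e 4"
  shows "critical_values e \<subseteq> (\<Union>i\<in>{1..4}. Lline e i) \<union> Ccurve e
    \<and> (\<forall>i\<in>{1..4}. infinite (critical_values e \<inter> Lline e i))
    \<and> Ccurve e \<subseteq> critical_values e
    \<and> (\<forall>i\<in>{1..4}. \<forall>j\<in>{1..4}. i \<noteq> j \<longrightarrow>
           Lline e i \<inter> Lline e j = {(e i + e j, e i * e j)} \<and> e i \<noteq> e j
           \<and> (e i + e j, e i * e j) \<in> critical_values e)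
    \<and> (\<forall>i\<in>{2,3}. Lline e i \<inter> Ccurve e = {(2 * e i, (e i)^2)}
           \<and> Lline e i \<inter> parabola = {(2 * e i, (e i)^2)})"
proof -
  note o = assms
  have P1: "critical_values e \<subseteq> (\<Union>i\<in>{1..4}. Lline e i) \<union> Ccurve e"
  proof
    fix z assume "z \<in> critical_values e"
    then obtain p where cp: "critical_point e p" and z: "z = EM e p" unfolding critical_values_def by auto
    from cp have "p \<in> Mh" by (simp add: critical_point_def)
    hence S: "(p$1)^2 + (p$2)^2 + (p$3)^2 + (p$4)^2 + (p$5)^2 + (p$6)^2 = 1"
      and Pf: "p$1 * p$6 - p$2 * p$5 + p$3 * p$4 = 0" by (simp_all add: Mh_iff)
    obtain a b c d where ab: "a \<noteq> 0 \<or> b \<noteq> 0"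
      and E1: "(a*(e 3+e 4) + b*(e 3*e 4) - c)*p$1 = d*p$6"
      and E2: "(a*(e 2+e 4) + b*(e 2*e 4) - c)*p$2 = -d*p$5"
      and E3: "(a*(e 2+e 3) + b*(e 2*e 3) - c)*p$3 = d*p$4"
      and E4: "(a*(e 1+e 4) + b*(e 1*e 4) - c)*p$4 = d*p$3"
      and E5: "(a*(e 1+e 3) + b*(e 1*e 3) - c)*p$5 = -d*p$2"
      and E6: "(a*(e 1+e 2) + b*(e 1*e 2) - c)*p$6 = d*p$1"
      using crit_imp[OF cp] by blast
    have h1: "eta1 e p = (p$1)^2*(e 3+e 4) + (p$2)^2*(e 2+e 4) + (p$3)^2*(e 2+e 3) + (p$4)^2*(e 1+e 4) + (p$5)^2*(e 1+e 3) + (p$6)^2*(e 1+e 2)"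
      by (simp add: eta1_def)
    have h2: "eta2 e p = (p$1)^2*(e 3*e 4) + (p$2)^2*(e 2*e 4) + (p$3)^2*(e 2*e 3) + (p$4)^2*(e 1*e 4) + (p$5)^2*(e 1*e 3) + (p$6)^2*(e 1*e 2)"
      by (simp add: eta2_def)
    have z': "z = (eta1 e p, eta2 e p)" using z by (simp add: EM_def)
    show "z \<in> (\<Union>i\<in>{1..4}. Lline e i) \<union> Ccurve e"
    proof (cases "d = 0")
      case True
      have "eta2 e p - e 1*(eta1 e p - e 1) = 0 \<or> eta2 e p - e 2*(eta1 e p - e 2) = 0 \<or>
            eta2 e p - e 3*(eta1 e p - e 3) = 0 \<or> eta2 e p - e 4*(eta1 e p - e 4) = 0"
        by (rule core_d0[OF o S Pf ab _ _ _ _ _ _ h1 h2]) (use E1 E2 E3 E4 E5 E6 True in simp_all)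
      hence "z \<in> Lline e 1 \<or> z \<in> Lline e 2 \<or> z \<in> Lline e 3 \<or> z \<in> Lline e 4"
        unfolding z' Lline_def by simp
      moreover have "(1::nat) \<in> {1..4}" "(2::nat) \<in> {1..4}" "(3::nat) \<in> {1..4}" "(4::nat) \<in> {1..4}" by auto
      ultimately show ?thesis by blast
    next
      case False
      obtain t where t: "e 2 \<le> t" "t \<le> e 3" "eta1 e p = 2*t" "eta2 e p = t^2"
        using core_dn[OF o S Pf ab False E1 E2 E3 E4 E5 E6 h1 h2] by blast
      have "z \<in> Ccurve e" unfolding z' Ccurve_def using t by auto
      thus ?thesis by blast
    qed
  qed
  have P2: "\<forall>i\<in>{1..4}. infinite (critical_values e \<inter> Lline e i)"
    using inf_lines[OF o] four by blast
  have P3: "Ccurve e \<subseteq> critical_values e"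
    unfolding Ccurve_def using C_crit[OF o] by auto
  have ne: "e 1 \<noteq> e 2" "e 1 \<noteq> e 3" "e 1 \<noteq> e 4" "e 2 \<noteq> e 3" "e 2 \<noteq> e 4" "e 3 \<noteq> e 4"
    "e 2 \<noteq> e 1" "e 3 \<noteq> e 1" "e 4 \<noteq> e 1" "e 3 \<noteq> e 2" "e 4 \<noteq> e 2" "e 4 \<noteq> e 3"
    using o by linarith+
  note dv = dval1 dval2 dval3 dval4 dval5 dval6 dsym[where e=e and a=3 and b=4, OF dval1[of e]] dsym[where e=e and a=2 and b=4, OF dval2[of e]] dsym[where e=e and a=2 and b=3, OF dval3[of e]]
    dsym[where e=e and a=1 and b=4, OF dval4[of e]] dsym[where e=e and a=1 and b=3, OF dval5[of e]] dsym[where e=e and a=1 and b=2, OF dval6[of e]]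
  have P4: "\<forall>i\<in>{1..4}. \<forall>j\<in>{1..4}. i \<noteq> j \<longrightarrow>
           Lline e i \<inter> Lline e j = {(e i + e j, e i * e j)} \<and> e i \<noteq> e j
           \<and> (e i + e j, e i * e j) \<in> critical_values e"
  proof (intro ballI impI)
    fix i j :: nat assume i: "i \<in> {1..4}" and j: "j \<in> {1..4}" and ij: "i \<noteq> j"
    have nij: "e i \<noteq> e j" using four[OF i] four[OF j] ij ne by auto
    have dij: "(e i + e j, e i * e j) \<in> critical_values e"
      using four[OF i] four[OF j] ij dv by auto
    show "Lline e i \<inter> Lline e j = {(e i + e j, e i * e j)} \<and> e i \<noteq> e j
           \<and> (e i + e j, e i * e j) \<in> critical_values e"
      using two_lines[OF nij] nij dij unfolding Lline_eq by simp
  qed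
  have P5: "\<forall>i\<in>{2,3}. Lline e i \<inter> Ccurve e = {(2 * e i, (e i)^2)}
           \<and> Lline e i \<inter> parabola = {(2 * e i, (e i)^2)}"
  proof
    fix i :: nat assume "i \<in> {2, 3}"
    hence "e 2 \<le> e i" "e i \<le> e 3" using o by auto
    thus "Lline e i \<inter> Ccurve e = {(2 * e i, (e i)^2)} \<and> Lline e i \<inter> parabola = {(2 * e i, (e i)^2)}"
      unfolding Lline_eq using line_C line_P by blast
  qed
  show ?thesis using P1 P2 P3 P4 P5 by blast
qed


end
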